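(* Let $\mathbf a=(a_0,a_1,\dots)\in\mathbb{R}^{\mathbb{N}}$. The linear centrality $f^{\mathbf a}$ satisfies the density axiom if and only if $a_k> k(a_2-a_1)+(2a_1-a_2)$ for all integers $k\ge 3$.
   Context: Graphs are finite directed graphs; $d_G(x,y)$ is the shortest directed path length from $x$ to $y$ ($\infty$ if none). For $\mathbf a\in\mathbb{R}^{\mathbb{N}}$ the linear centrality is $f^{\mathbf a}_G(i)=\sum_{k\ge 0}|\{j: d_G(j,i)=k\}|\,a_k$ (only finite distances counted). For positive integers $k,p$: a $k$-clique is a set of $k$ nodes with arcs in both directions between every pair of distinct nodes; a directed $p$-cycle is a set of $p$ nodes $z_0,\dots,z_{p-1}$ with arcs $z_j\to z_{j+1 \bmod p}$. Let $x$ be a node of the $k$-clique and $y$ a node of the $p$-cycle; $S_{xy}$ is the disjoint union of the $k$-clique and the directed $p$-cycle together with the two arcs $x\to y$ and $y\to x$. A centrality $f$ satisfies the density axiom if for every $k\ge 3$, taking $p=k$, one has $f_{S_{xy}}(x)>f_{S_{xy}}(y)$. *)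

theory Defs
  imports Main "HOL-Library.Extended_Nat"
begin

definition graph_dist :: "('v \<times> 'v) set \<Rightarrow> 'v \<Rightarrow> 'v \<Rightarrow> enat" where
  "graph_dist E x y =
     (if \<exists>n. (x, y) \<in> E ^^ n then enat (LEAST n. (x, y) \<in> E ^^ n) else \<infinity>)"

definition lin_centrality :: "(nat \<Rightarrow> real) \<Rightarrow> 'v set \<Rightarrow> ('v \<times> 'v) set \<Rightarrow> 'v \<Rightarrow> real" where
  "lin_centrality a V E i =
     (\<Sum>k\<in>{k. \<exists>j\<in>V. graph_dist E j i = enat k}.
        real (card {j\<in>V. graph_dist E j i = enat k}) * a k)"

text \<open>The graph S_xy: k-clique on nodes Inl 0..Inl (k-1), directed p-cycle on nodes
  Inr 0..Inr (p-1) with arcs Inr j \<rightarrow> Inr ((j+1) mod p), plus arcs x \<leftrightarrow> y.\<close>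
definition S_nodes :: "nat \<Rightarrow> nat \<Rightarrow> (nat + nat) set" where
  "S_nodes k p = Inl ` {..<k} \<union> Inr ` {..<p}"

definition S_arcs :: "nat \<Rightarrow> nat \<Rightarrow> nat \<Rightarrow> nat \<Rightarrow> ((nat + nat) \<times> (nat + nat)) set" where
  "S_arcs k p x y =
     {(Inl i, Inl j) | i j. i < k \<and> j < k \<and> i \<noteq> j}
   \<union> {(Inr j, Inr ((j + 1) mod p)) | j. j < p}
   \<union> {(Inl x, Inr y), (Inr y, Inl x)}"

definition density_axiom :: "(nat \<Rightarrow> real) \<Rightarrow> bool" where
  "density_axiom a \<longleftrightarrow>
     (\<forall>k\<ge>3. \<forall>x<k. \<forall>y<k.
        lin_centrality a (S_nodes k k) (S_arcs k k x y) (Inl x)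
          > lin_centrality a (S_nodes k k) (S_arcs k k x y) (Inr y))"

end

theory Submission
  imports Defs
begin

lemma dist_lower:
  assumes a: "\<And>u w. (u,w) \<in> E \<Longrightarrow> D u \<le> D w + (1::nat)"
  shows "(j,t) \<in> E ^^ n \<Longrightarrow> D j \<le> n + D t"
proof (induction n arbitrary: j)
  case 0 then show ?case by simp
next
  case (Suc n)
  then obtain w where "(j,w) \<in> E" "(w,t) \<in> E ^^ n" using relpow_Suc_D2 by metis
  with Suc.IH a show ?case by fastforce
qed

lemma dist_upper:
  assumes c: "\<And>j. j \<in> V \<Longrightarrow> D j \<noteq> 0 \<Longrightarrow> \<exists>w\<in>V. (j,w)\<in>E \<and> D j = D w + (1::nat)"
  and z: "\<And>j. j \<in> V \<Longrightarrow> D j = 0 \<Longrightarrow> j = i"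
  shows "j \<in> V \<Longrightarrow> D j = m \<Longrightarrow> (j,i) \<in> E ^^ m"
proof (induction m arbitrary: j)
  case 0 then show ?case using z by simp
next
  case (Suc m)
  then obtain w where "w \<in> V" "(j,w)\<in>E" "D j = D w + 1" using c by fastforce
  with Suc.IH have "(w,i) \<in> E ^^ m" using Suc.prems by simp
  then show ?case using \<open>(j,w)\<in>E\<close> by (meson relpow_Suc_I2)
qed

lemma dist_char:
  fixes D :: "'v \<Rightarrow> nat"
  assumes a: "\<And>u w. (u,w) \<in> E \<Longrightarrow> D u \<le> D w + 1"
  and b: "D i = 0"
  and c: "\<And>j. j \<in> V \<Longrightarrow> D j \<noteq> 0 \<Longrightarrow> \<exists>w\<in>V. (j,w)\<in>E \<and> D j = D w + 1"
  and z: "\<And>j. j \<in> V \<Longrightarrow> D j = 0 \<Longrightarrow> j = i"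
  and j: "j \<in> V"
  shows "graph_dist E j i = enat (D j)"
proof -
  have up: "(j,i) \<in> E ^^ D j" by (rule dist_upper[OF c z j refl])
  have "(LEAST n. (j, i) \<in> E ^^ n) = D j"
  proof (rule Least_equality)
    show "(j, i) \<in> E ^^ D j" by (rule up)
  next
    fix n assume "(j, i) \<in> E ^^ n"
    then show "D j \<le> n" using dist_lower[OF a] b by fastforce
  qed
  then show ?thesis using up unfolding graph_dist_def by auto
qed

lemma lin_char:
  assumes fin: "finite V" and d: "\<And>j. j \<in> V \<Longrightarrow> graph_dist E j i = enat (D j)"
  shows "lin_centrality a V E i = (\<Sum>j\<in>V. a (D j))"
proof -
  have 1: "{k. \<exists>j\<in>V. graph_dist E j i = enat k} = D ` V" using d by auto
  have 2: "{j\<in>V. graph_dist E j i = enat k} = {j\<in>V. D j = k}" for k using d by auto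
  have "(\<Sum>j\<in>V. a (D j)) = (\<Sum>k\<in>D ` V. \<Sum>j\<in>{j\<in>V. D j = k}. a (D j))"
    by (rule sum.image_gen[OF fin])
  also have "\<dots> = (\<Sum>k\<in>D ` V. real (card {j\<in>V. D j = k}) * a k)"
    by (rule sum.cong) auto
  finally show ?thesis unfolding lin_centrality_def 1 2 by simp
qed

definition cyc :: "nat \<Rightarrow> nat \<Rightarrow> nat \<Rightarrow> nat" where
  "cyc k y m = (if m \<le> y then y - m else y + k - m)"

definition Dx :: "nat \<Rightarrow> nat \<Rightarrow> nat \<Rightarrow> nat + nat \<Rightarrow> nat" where
  "Dx k x y = case_sum (\<lambda>i. if i = x then 0 else 1) (\<lambda>m. cyc k y m + 1)"

definition Dy :: "nat \<Rightarrow> nat \<Rightarrow> nat \<Rightarrow> nat + nat \<Rightarrow> nat" where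
  "Dy k x y = case_sum (\<lambda>i. if i = x then 1 else 2) (\<lambda>m. cyc k y m)"

lemma suc_mod: "j < k \<Longrightarrow> Suc j mod k = (if Suc j = k then 0 else Suc j)"
  by auto

lemma arcs_cases:
  assumes "(u,w) \<in> S_arcs k k x y"
  obtains (cl) i j where "u = Inl i" "w = Inl j" "i < k" "j < k" "i \<noteq> j"
  | (cy) m where "u = Inr m" "w = Inr (if Suc m = k then 0 else Suc m)" "m < k"
  | (xy) "u = Inl x" "w = Inr y"
  | (yx) "u = Inr y" "w = Inl x"
  using assms unfolding S_arcs_def by (auto simp: suc_mod)

lemma cyc_step: "m < k \<Longrightarrow> y < k \<Longrightarrow> m \<noteq> y \<Longrightarrow>
   cyc k y m = cyc k y (if Suc m = k then 0 else Suc m) + 1"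
  unfolding cyc_def by auto

lemma cyc_le: "m < k \<Longrightarrow> y < k \<Longrightarrow> cyc k y m \<le> cyc k y (if Suc m = k then 0 else Suc m) + 1"
  unfolding cyc_def by auto

lemma cyc_zero: "m < k \<Longrightarrow> y < k \<Longrightarrow> cyc k y m = 0 \<longleftrightarrow> m = y"
  unfolding cyc_def by auto

lemma cyc_bij: assumes "y < k" shows "cyc k y ` {..<k} = {..<k}"
proof (rule endo_inj_surj)
  show "cyc k y ` {..<k} \<subseteq> {..<k}" using assms unfolding cyc_def by auto
  show "inj_on (cyc k y) {..<k}" unfolding inj_on_def cyc_def using assms
    by (auto split: if_splits)
qed simp

lemma cyc_sum: assumes "y < k" shows "(\<Sum>m<k. g (cyc k y m)) = (\<Sum>d<k. g d)"
proof -
  have "inj_on (cyc k y) {..<k}" using cyc_bij[OF assms]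
    by (simp add: eq_card_imp_inj_on)
  then have "(\<Sum>d\<in>cyc k y ` {..<k}. g d) = (\<Sum>m<k. g (cyc k y m))"
    by (rule sum.reindex[unfolded comp_def])
  then show ?thesis using cyc_bij[OF assms] by simp
qed

lemma arc_in: "i < k \<Longrightarrow> j < k \<Longrightarrow> i \<noteq> j \<Longrightarrow> (Inl i, Inl j) \<in> S_arcs k k x y"
  "m < k \<Longrightarrow> (Inr m, Inr (if Suc m = k then 0 else Suc m)) \<in> S_arcs k k x y"
  "(Inl x, Inr y) \<in> S_arcs k k x y" "(Inr y, Inl x) \<in> S_arcs k k x y"
  unfolding S_arcs_def by (auto simp: suc_mod)

lemma fin_S: "finite (S_nodes k p)" unfolding S_nodes_def by simp

lemma sum_S: "(\<Sum>j\<in>S_nodes k p. g j) = (\<Sum>i<k. g (Inl i)) + (\<Sum>m<p. g (Inr m))"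
  unfolding S_nodes_def
  by (subst sum.union_disjoint) (auto simp: sum.reindex inj_on_def)

lemma sum_if: "x < k \<Longrightarrow> (\<Sum>i<k. if i = x then (c::real) else d) = c + (real k - 1) * d"
proof -
  assume "x < k"
  then have "(\<Sum>i<k. if i = x then c else d) = c + (\<Sum>i\<in>{..<k}-{x}. if i = x then c else d)"
    by (subst sum.remove[of _ x]) auto
  also have "\<dots> = c + real (k - 1) * d" using \<open>x<k\<close> by simp
  finally show ?thesis using \<open>x<k\<close> by (simp add: of_nat_diff)
qed

lemma S_nodes_cases [consumes 1, case_names L R]: "j \<in> S_nodes k k \<Longrightarrow> (\<And>i. j = Inl i \<Longrightarrow> i < k \<Longrightarrow> P) \<Longrightarrow> (\<And>m. j = Inr m \<Longrightarrow> m < k \<Longrightarrow> P) \<Longrightarrow> P"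
  unfolding S_nodes_def by auto

lemma in_S: "i < k \<Longrightarrow> Inl i \<in> S_nodes k k" "m < k \<Longrightarrow> Inr m \<in> S_nodes k k"
  unfolding S_nodes_def by auto

lemma centr_x:
  assumes "x < k" "y < k"
  shows "lin_centrality a (S_nodes k k) (S_arcs k k x y) (Inl x)
     = a 0 + (real k - 1) * a 1 + (\<Sum>d<k. a (Suc d))"
proof -
  let ?D = "Dx k x y"
  have d: "graph_dist (S_arcs k k x y) j (Inl x) = enat (?D j)" if j: "j \<in> S_nodes k k" for j
  proof (rule dist_char[where V="S_nodes k k"])
    fix u w assume "(u, w) \<in> S_arcs k k x y"
    then show "?D u \<le> ?D w + 1"
      by (cases rule: arcs_cases) (use assms cyc_le in \<open>auto simp: Dx_def cyc_def\<close>)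
  next
    show "?D (Inl x) = 0" by (simp add: Dx_def)
  next
    fix j assume "j \<in> S_nodes k k" "?D j \<noteq> 0"
    then show "\<exists>w\<in>S_nodes k k. (j, w) \<in> S_arcs k k x y \<and> ?D j = ?D w + 1"
    proof (cases rule: S_nodes_cases)
      case (L i)
      then show ?thesis using assms \<open>?D j \<noteq> 0\<close>
        by (intro bexI[of _ "Inl x"]) (auto simp: Dx_def arc_in in_S)
    next
      case (R m)
      show ?thesis
      proof (cases "m = y")
        case True then show ?thesis using assms R
          by (intro bexI[of _ "Inl x"]) (auto simp: Dx_def arc_in in_S cyc_def)
      next
        case False then show ?thesis using assms R cyc_step[of m k y]
          by (intro bexI[of _ "Inr (if Suc m = k then 0 else Suc m)"]) (auto simp: Dx_def arc_in in_S)
      qed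
    qed
  next
    fix j assume "j \<in> S_nodes k k" "?D j = 0"
    then show "j = Inl x" by (cases rule: S_nodes_cases) (auto simp: Dx_def split: if_splits)
  qed (rule j)
  have "lin_centrality a (S_nodes k k) (S_arcs k k x y) (Inl x) = (\<Sum>j\<in>S_nodes k k. a (?D j))"
    by (rule lin_char[OF fin_S d])
  also have "\<dots> = (\<Sum>i<k. if i = x then a 0 else a 1) + (\<Sum>m<k. a (Suc (cyc k y m)))"
    unfolding sum_S by (auto simp: Dx_def intro!: sum.cong)
  also have "\<dots> = a 0 + (real k - 1) * a 1 + (\<Sum>d<k. a (Suc d))"
    using sum_if[OF assms(1)] cyc_sum[OF assms(2), of "\<lambda>d. a (Suc d)"] by simp
  finally show ?thesis .
qed

lemma centr_y:
  assumes "x < k" "y < k"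
  shows "lin_centrality a (S_nodes k k) (S_arcs k k x y) (Inr y)
     = a 1 + (real k - 1) * a 2 + (\<Sum>d<k. a d)"
proof -
  let ?D = "Dy k x y"
  have d: "graph_dist (S_arcs k k x y) j (Inr y) = enat (?D j)" if j: "j \<in> S_nodes k k" for j
  proof (rule dist_char[where V="S_nodes k k"])
    fix u w assume "(u, w) \<in> S_arcs k k x y"
    then show "?D u \<le> ?D w + 1"
      by (cases rule: arcs_cases) (use assms cyc_le in \<open>auto simp: Dy_def cyc_def\<close>)
  next
    show "?D (Inr y) = 0" by (simp add: Dy_def cyc_def)
  next
    fix j assume "j \<in> S_nodes k k" "?D j \<noteq> 0"
    then show "\<exists>w\<in>S_nodes k k. (j, w) \<in> S_arcs k k x y \<and> ?D j = ?D w + 1"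
    proof (cases rule: S_nodes_cases)
      case (L i)
      show ?thesis
      proof (cases "i = x")
        case True then show ?thesis using assms L
          by (intro bexI[of _ "Inr y"]) (auto simp: Dy_def arc_in in_S cyc_def)
      next
        case False then show ?thesis using assms L
          by (intro bexI[of _ "Inl x"]) (auto simp: Dy_def arc_in in_S)
      qed
    next
      case (R m)
      then have "m \<noteq> y" using \<open>?D j \<noteq> 0\<close> by (auto simp: Dy_def cyc_def)
      then show ?thesis using assms R cyc_step[of m k y]
          by (intro bexI[of _ "Inr (if Suc m = k then 0 else Suc m)"]) (auto simp: Dy_def arc_in in_S)
    qed
  next
    fix j assume "j \<in> S_nodes k k" "?D j = 0"
    then show "j = Inr y" using assms
      by (cases rule: S_nodes_cases) (auto simp: Dy_def cyc_zero split: if_splits)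
  qed (rule j)
  have "lin_centrality a (S_nodes k k) (S_arcs k k x y) (Inr y) = (\<Sum>j\<in>S_nodes k k. a (?D j))"
    by (rule lin_char[OF fin_S d])
  also have "\<dots> = (\<Sum>i<k. if i = x then a 1 else a 2) + (\<Sum>m<k. a (cyc k y m))"
    unfolding sum_S by (auto simp: Dy_def intro!: sum.cong)
  also have "\<dots> = a 1 + (real k - 1) * a 2 + (\<Sum>d<k. a d)"
    using sum_if[OF assms(1)] cyc_sum[OF assms(2), of a] by simp
  finally show ?thesis .
qed

lemma centr_diff:
  assumes "x < k" "y < k"
  shows "lin_centrality a (S_nodes k k) (S_arcs k k x y) (Inl x)
       - lin_centrality a (S_nodes k k) (S_arcs k k x y) (Inr y)
       = a k - (real k * (a 2 - a 1) + (2 * a 1 - a 2))"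
proof -
  have t: "(\<Sum>d<k. a (Suc d)) - (\<Sum>d<k. a d) = a k - a 0"
    using sum_lessThan_telescope[of a k] by (simp add: sum_subtractf)
  show ?thesis unfolding centr_x[OF assms] centr_y[OF assms] using t
    by (simp add: algebra_simps)
qed

theorem proposition1:
  fixes a :: "nat \<Rightarrow> real"
  shows "density_axiom a \<longleftrightarrow>
         (\<forall>k::nat. k \<ge> 3 \<longrightarrow> a k > real k * (a 2 - a 1) + (2 * a 1 - a 2))"
proof
  assume h: "density_axiom a"
  show "\<forall>k::nat. k \<ge> 3 \<longrightarrow> a k > real k * (a 2 - a 1) + (2 * a 1 - a 2)"
  proof (intro allI impI)
    fix k :: nat assume k: "k \<ge> 3"
    then have "0 < k" by simp
    with h k have "lin_centrality a (S_nodes k k) (S_arcs k k 0 0) (Inl 0)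
          > lin_centrality a (S_nodes k k) (S_arcs k k 0 0) (Inr 0)"
      unfolding density_axiom_def by blast
    then show "a k > real k * (a 2 - a 1) + (2 * a 1 - a 2)"
      using centr_diff[OF \<open>0<k\<close> \<open>0<k\<close>, of a] by linarith
  qed
next
  assume h: "\<forall>k::nat. k \<ge> 3 \<longrightarrow> a k > real k * (a 2 - a 1) + (2 * a 1 - a 2)"
  show "density_axiom a" unfolding density_axiom_def
  proof (intro allI impI)
    fix k x y :: nat assume "3 \<le> k" "x < k" "y < k"
    then show "lin_centrality a (S_nodes k k) (S_arcs k k x y) (Inl x)
          > lin_centrality a (S_nodes k k) (S_arcs k k x y) (Inr y)"
      using centr_diff[of x k y a] h by force
  qed
qed

end
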